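(* Consider the instance with $\bar v=1$, $\rho=1/2$, $v_t=1$ for all $t\in[T]$, and $G$ the uniform distribution on $\{1/3,2/3\}$. For any online throttling strategy $\beta$ and any realization $\bm p\in\{1/3,2/3\}^T$, letting $S$ be the number of entries of $\bm p$ equal to $1/3$, the total revenue satisfies \[R^\beta(\bm p)\le\begin{cases}\frac13(S+T), & S\ge T/2,\\[2pt] \frac23 S+\frac13\left\lfloor\frac{3T-2S}{4}\right\rfloor, & S<T/2.\end{cases}\]
   Context: A buyer participates in $T$ repeated second-price auctions with budget $B=\rho T$. In round $t$ she has value $v_t$ and the highest competing bid is $p_t$; she chooses $x_t\in\{0,1\}$, receiving revenue $x_t(v_t-p_t)^+$ and paying $x_tp_t\mathbf 1[v_t\ge p_t]$. An online throttling strategy chooses $x_t$ based on past observations, $v_t$ and internal randomness, and its total payment must not exceed $B$. $R^\beta(\bm p)$ denotes the total revenue $\sum_tx_t(v_t-p_t)^+$ (values being fixed at $1$). *)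

theory Defs
  imports Complex_Main
begin

text \<open>A (randomized) throttling strategy is a map beta t p w :: bool giving the decision x_t
in round t (t < T) for the price sequence p and internal randomness w.\<close>

definition price_seq :: "nat \<Rightarrow> (nat \<Rightarrow> real) \<Rightarrow> bool" where
  "price_seq T p \<longleftrightarrow> (\<forall>t<T. p t \<in> {1/3, 2/3})"

definition payment :: "nat \<Rightarrow> (nat \<Rightarrow> (nat \<Rightarrow> real) \<Rightarrow> 'w \<Rightarrow> bool) \<Rightarrow> (nat \<Rightarrow> real) \<Rightarrow> 'w \<Rightarrow> real" where
  "payment T beta p w = (\<Sum>t<T. if beta t p w \<and> (1::real) \<ge> p t then p t else 0)"

definition revenue :: "nat \<Rightarrow> (nat \<Rightarrow> (nat \<Rightarrow> real) \<Rightarrow> 'w \<Rightarrow> bool) \<Rightarrow> (nat \<Rightarrow> real) \<Rightarrow> 'w \<Rightarrow> real" where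
  "revenue T beta p w = (\<Sum>t<T. if beta t p w then max (1 - p t) 0 else 0)"

text \<open>Online: the decision in round t depends only on past prices p_0..p_(t-1)
(the value v_t = 1 is fixed) and the internal randomness; the budget B = T/2
is respected on every price sequence and every realization of the randomness.\<close>

definition online_throttling :: "nat \<Rightarrow> (nat \<Rightarrow> (nat \<Rightarrow> real) \<Rightarrow> 'w \<Rightarrow> bool) \<Rightarrow> bool" where
  "online_throttling T beta \<longleftrightarrow>
     (\<forall>t p p' w. (\<forall>s<t. p s = p' s) \<longrightarrow> beta t p w = beta t p' w) \<and>
     (\<forall>p w. price_seq T p \<longrightarrow> payment T beta p w \<le> real T / 2)"

end

theory Submission
  imports Defs
begin

lemma sum_ind:
  fixes c :: real and A :: "nat set" and T :: nat
  shows "(\<Sum>t<T. if t \<in> A then c else 0) = c * real (card {t. t < T \<and> t \<in> A})"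
proof -
  have "(\<Sum>t<T. if t \<in> A then c else 0) = sum (\<lambda>_. c) {t\<in>{..<T}. t \<in> A}"
    using sum.inter_filter[OF finite_lessThan[of T], where g="\<lambda>_. c" and P="\<lambda>t. t \<in> A"] by simp
  also have "{t\<in>{..<T}. t \<in> A} = {t. t < T \<and> t \<in> A}" by auto
  finally show ?thesis by simp
qed

theorem lemma6:
  fixes T :: nat and beta :: "nat \<Rightarrow> (nat \<Rightarrow> real) \<Rightarrow> 'w \<Rightarrow> bool"
    and p :: "nat \<Rightarrow> real" and w :: 'w
  assumes "online_throttling T beta"
    and "price_seq T p"
  defines "S \<equiv> card {t. t < T \<and> p t = 1/3}"
  shows "revenue T beta p w \<le>
    (if real S \<ge> real T / 2 then (real S + real T) / 3
     else 2/3 * real S + 1/3 * real_of_int \<lfloor>(3 * real T - 2 * real S) / 4\<rfloor>)"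
proof -
  define A where "A = {t. beta t p w \<and> p t = 1/3}"
  define B where "B = {t. beta t p w \<and> p t = 2/3}"
  define a where "a = card {t. t < T \<and> t \<in> A}"
  define b where "b = card {t. t < T \<and> t \<in> B}"
  have pv: "\<And>t. t < T \<Longrightarrow> p t = 1/3 \<or> p t = 2/3" using assms(2) unfolding price_seq_def by auto
  have rev: "revenue T beta p w = 2/3 * real a + 1/3 * real b"
  proof -
    have "revenue T beta p w = (\<Sum>t<T. (if t \<in> A then 2/3 else 0) + (if t \<in> B then 1/3 else 0))"
      unfolding revenue_def
      apply (rule sum.cong, simp)
      using pv by (auto simp: A_def B_def)
    also have "\<dots> = 2/3 * real a + 1/3 * real b"
      by (simp add: sum.distrib sum_ind a_def b_def)
    finally show ?thesis .
  qed
  have pay: "payment T beta p w = 1/3 * real a + 2/3 * real b"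
  proof -
    have "payment T beta p w = (\<Sum>t<T. (if t \<in> A then 1/3 else 0) + (if t \<in> B then 2/3 else 0))"
      unfolding payment_def
      apply (rule sum.cong, simp)
      using pv by (auto simp: A_def B_def)
    also have "\<dots> = 1/3 * real a + 2/3 * real b"
      by (simp add: sum.distrib sum_ind a_def b_def)
    finally show ?thesis .
  qed
  have budget: "1/3 * real a + 2/3 * real b \<le> real T / 2"
  proof -
    have "payment T beta p w \<le> real T / 2" using assms(1,2) unfolding online_throttling_def by blast
    thus ?thesis using pay by simp
  qed
  have aS: "a \<le> S" unfolding a_def S_def A_def
    by (rule card_mono) auto
  have ab: "a + b \<le> T"
  proof -
    have "a + b = card ({t. t < T \<and> t \<in> A} \<union> {t. t < T \<and> t \<in> B})"
      unfolding a_def b_def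
      by (rule card_Un_disjoint[symmetric]) (auto simp: A_def B_def)
    also have "\<dots> \<le> card {..<T}" by (rule card_mono) auto
    finally show ?thesis by simp
  qed
  show ?thesis
  proof (cases "real S \<ge> real T / 2")
    case True
    have "real a + real b \<le> real T" using ab by linarith
    then show ?thesis using True rev aS by simp
  next
    case False
    have "int (2*a + b) - 2 * int S \<le> \<lfloor>(3 * real T - 2 * real S) / 4\<rfloor>"
    proof (rule le_floor_iff[THEN iffD2])
      have "real a \<le> real S" using aS by simp
      then show "real_of_int (int (2*a + b) - 2 * int S) \<le> (3 * real T - 2 * real S) / 4"
        using budget by simp
    qed
    have "real (2*a+b) - 2 * real S \<le> real_of_int \<lfloor>(3 * real T - 2 * real S) / 4\<rfloor>"
    proof -
      have "real_of_int (int (2*a + b) - 2 * int S) = real (2*a+b) - 2 * real S" by simp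
      then show ?thesis using \<open>int (2*a + b) - 2 * int S \<le> _\<close> by (metis of_int_le_iff)
    qed
    then show ?thesis using False rev by simp
  qed
qed

end
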